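(* Let $\mu$ be a doubling measure on $\mathbb{R}^d$, $\Omega\subset\mathbb{R}^d$ a domain, $r$ an admissible radius function in $\Omega$ satisfying $|r(x)-r(y)|\leq|x-y|$ for all $x,y\in\Omega$, and $u\in L^\infty(\Omega)$. There are constants $C>0$ and $0<\theta\leq 1$, depending only on $\mu$ and $d$, such that for all $x,y\in\Omega$, $$|Mu(x)-Mu(y)| \leq C\,\|u\|_\infty \Big(\frac{|x-y|}{r(x)}\Big)^{\theta}.$$
   Context: A doubling measure on $\mathbb{R}^d$ is a positive Borel measure $\mu$ such that $0<\mu(B)<\infty$ for every open ball $B$ and there is $D\geq1$ with $\mu(B(a,2s))\leq D\mu(B(a,s))$ for all $a$, $s>0$. A function $r:\Omega\to(0,+\infty)$ is an admissible radius function in $\Omega$ if $0<r(x)\leq\operatorname{dist}(x,\partial\Omega)$ for all $x\in\Omega$; $B_x=B(x,r(x))$ is the open ball. $Mu(x)=\frac{1}{\mu(B_x)}\int_{B_x}u\,d\mu$ for $x\in\Omega$. *)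

theory Defs
  imports "HOL-Analysis.Analysis" "HOL-Probability.Essential_Supremum"
begin

definition doubling_measure :: "'a::euclidean_space measure \<Rightarrow> bool" where
  "doubling_measure \<mu> \<longleftrightarrow>
     sets \<mu> = sets borel \<and>
     (\<forall>a s. s > 0 \<longrightarrow> 0 < emeasure \<mu> (ball a s) \<and> emeasure \<mu> (ball a s) < \<infinity>) \<and>
     (\<exists>D::real. D \<ge> 1 \<and> (\<forall>a s. s > 0 \<longrightarrow>
         emeasure \<mu> (ball a (2 * s)) \<le> ennreal D * emeasure \<mu> (ball a s)))"

definition domain :: "'a::euclidean_space set \<Rightarrow> bool" where
  "domain \<Omega> \<longleftrightarrow> open \<Omega> \<and> connected \<Omega> \<and> \<Omega> \<noteq> {}"

text \<open>Admissible radius function; dist(x, boundary) is taken to be +infinity when the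
  boundary is empty (i.e. the domain is the whole space).\<close>
definition admissible_radius :: "'a::euclidean_space set \<Rightarrow> ('a \<Rightarrow> real) \<Rightarrow> bool" where
  "admissible_radius \<Omega> r \<longleftrightarrow>
     (\<forall>x\<in>\<Omega>. 0 < r x \<and> (frontier \<Omega> \<noteq> {} \<longrightarrow> r x \<le> infdist x (frontier \<Omega>)))"

definition avg_op :: "'a::euclidean_space measure \<Rightarrow> ('a \<Rightarrow> real) \<Rightarrow> ('a \<Rightarrow> real) \<Rightarrow> 'a \<Rightarrow> real" where
  "avg_op \<mu> r u x = set_lebesgue_integral \<mu> (ball x (r x)) u / measure \<mu> (ball x (r x))"

definition Linf_on :: "'a::euclidean_space measure \<Rightarrow> 'a set \<Rightarrow> ('a \<Rightarrow> real) \<Rightarrow> bool" where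
  "Linf_on \<mu> \<Omega> u \<longleftrightarrow> u \<in> borel_measurable (restrict_space \<mu> \<Omega>) \<and>
     esssup (restrict_space \<mu> \<Omega>) (\<lambda>x. ereal \<bar>u x\<bar>) < \<infinity>"

definition Linf_norm :: "'a::euclidean_space measure \<Rightarrow> 'a set \<Rightarrow> ('a \<Rightarrow> real) \<Rightarrow> real" where
  "Linf_norm \<mu> \<Omega> u = real_of_ereal (esssup (restrict_space \<mu> \<Omega>) (\<lambda>x. ereal \<bar>u x\<bar>))"

end

theory Submission
  imports Defs
begin

lemma alg:
  fixes Ix Iy mx my M \<delta> :: real
  assumes "mx > 0" "my > 0" "\<bar>Iy\<bar> \<le> M * my" "\<bar>Ix - Iy\<bar> \<le> M * \<delta>" "\<bar>mx - my\<bar> \<le> \<delta>" "M \<ge> 0"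
  shows "\<bar>Ix / mx - Iy / my\<bar> \<le> 2 * M * \<delta> / mx"
proof -
  have e: "Ix / mx - Iy / my = (Ix - Iy) / mx + Iy * (my - mx) / (mx * my)"
    using assms by (simp add: field_simps)
  have 1: "\<bar>(Ix - Iy) / mx\<bar> \<le> M * \<delta> / mx"
    using assms by (simp add: abs_divide divide_right_mono)
  have "\<bar>Iy * (my - mx)\<bar> \<le> (M * my) * \<delta>"
    unfolding abs_mult using assms by (intro mult_mono) (auto simp: abs_minus_commute)
  then have "\<bar>Iy * (my - mx)\<bar> / (mx * my) \<le> (M * my) * \<delta> / (mx * my)"
    using assms by (intro divide_right_mono) auto
  then have "\<bar>Iy * (my - mx) / (mx * my)\<bar> \<le> (M * my) * \<delta> / (mx * my)"
    using assms by (simp add: abs_divide)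
  also have "\<dots> = M * \<delta> / mx" using assms by (simp add: field_simps)
  finally have 2: "\<bar>Iy * (my - mx) / (mx * my)\<bar> \<le> M * \<delta> / mx" .
  have "\<bar>Ix / mx - Iy / my\<bar> \<le> \<bar>(Ix - Iy) / mx\<bar> + \<bar>Iy * (my - mx) / (mx * my)\<bar>"
    unfolding e by (rule abs_triangle_ineq)
  also have "\<dots> \<le> 2 * M * \<delta> / mx"
  proof -
    have "2 * M * \<delta> / mx = M * \<delta> / mx + M * \<delta> / mx" by (simp add: field_simps)
    then show ?thesis using 1 2 by linarith
  qed
  finally show ?thesis .
qed

locale dbl =
  fixes \<mu> :: "'a::euclidean_space measure" and D :: real
  assumes sets_eq: "sets \<mu> = sets borel"
    and fin: "\<And>a s. s > 0 \<Longrightarrow> emeasure \<mu> (ball a s) < \<infinity>"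
    and D1: "D \<ge> 1" and pos: "\<And>a s. s > 0 \<Longrightarrow> 0 < emeasure \<mu> (ball a s)"
    and dbl_ax: "\<And>a s. s > 0 \<Longrightarrow> emeasure \<mu> (ball a (2 * s)) \<le> ennreal D * emeasure \<mu> (ball a s)"
begin

lemma meas_borel[simp]: "S \<in> sets borel \<Longrightarrow> S \<in> sets \<mu>"
  by (simp add: sets_eq)

lemma ball_sets[simp]: "ball a s \<in> sets \<mu>"
  by simp

lemma fin_bounded: assumes "S \<subseteq> ball a s" "S \<in> sets borel"
  shows "emeasure \<mu> S < \<infinity>"
proof (cases "s > 0")
  case True
  then show ?thesis using emeasure_mono[OF assms(1) ball_sets] fin[OF True] by (meson le_less_trans)
next
  case False
  then have "S = {}" using assms by (auto simp: ball_empty)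
  then show ?thesis by simp
qed

lemma fmeas: assumes "S \<subseteq> ball a s" "S \<in> sets borel"
  shows "S \<in> fmeasurable \<mu>"
  using fin_bounded[OF assms] assms by (intro fmeasurableI) auto

lemma em_eq: assumes "S \<subseteq> ball a s" "S \<in> sets borel"
  shows "emeasure \<mu> S = ennreal (measure \<mu> S)"
  using fin_bounded[OF assms] by (intro emeasure_eq_ennreal_measure) auto

lemma dbl3: assumes "s > 0" shows "emeasure \<mu> (ball a (8 * s)) \<le> ennreal (D^3) * emeasure \<mu> (ball a s)"
proof -
  have "emeasure \<mu> (ball a (8 * s)) = emeasure \<mu> (ball a (2 * (4 * s)))" by simp
  also have "\<dots> \<le> ennreal D * emeasure \<mu> (ball a (2 * (2 * s)))" using dbl_ax[of "4 * s" a] assms by simp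
  also have "\<dots> \<le> ennreal D * (ennreal D * emeasure \<mu> (ball a (2 * s)))"
    using dbl_ax[of "2 * s" a] assms by (intro mult_left_mono) auto
  also have "\<dots> \<le> ennreal D * (ennreal D * (ennreal D * emeasure \<mu> (ball a s)))"
    using dbl_ax[of s a] assms by (intro mult_left_mono) auto
  also have "\<dots> = ennreal (D^3) * emeasure \<mu> (ball a s)"
    using D1 by (simp add: ennreal_mult' power3_eq_cube mult.assoc)
  finally show ?thesis .
qed

lemma dbl_real: assumes "s > 0" shows "measure \<mu> (ball a (2 * s)) \<le> D * measure \<mu> (ball a s)"
proof -
  have "ennreal (measure \<mu> (ball a (2 * s))) \<le> ennreal D * ennreal (measure \<mu> (ball a s))"
    using dbl_ax[OF assms, of a] em_eq[of "ball a (2 * s)" a "2 * s"] em_eq[of "ball a s" a s] by simp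
  also have "\<dots> = ennreal (D * measure \<mu> (ball a s))" using D1 by (simp add: ennreal_mult)
  finally show ?thesis using D1 by (simp add: ennreal_le_iff)
qed

lemma UN_le: assumes "countable I" "\<And>i. i \<in> I \<Longrightarrow> X i \<in> sets \<mu>"
  shows "emeasure \<mu> (\<Union>(X ` I)) \<le> (\<integral>\<^sup>+i. emeasure \<mu> (X i) \<partial>count_space I)"
proof -
  have ms: "(\<Union>(X ` I)) \<in> sets \<mu>" using assms by (intro sets.countable_UN') auto
  have "emeasure \<mu> (\<Union>(X ` I)) = (\<integral>\<^sup>+x. indicator (\<Union>(X ` I)) x \<partial>\<mu>)"
    using ms by simp
  also have "\<dots> \<le> (\<integral>\<^sup>+x. (\<integral>\<^sup>+i. indicator (X i) x \<partial>count_space I) \<partial>\<mu>)"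
  proof (intro nn_integral_mono)
    fix x
    show "indicator (\<Union>(X ` I)) x \<le> (\<integral>\<^sup>+i. indicator (X i) x \<partial>count_space I)"
    proof (cases "x \<in> \<Union>(X ` I)")
      case True
      then obtain j where j: "j \<in> I" "x \<in> X j" by auto
      have "(\<integral>\<^sup>+i. indicator {j} i \<partial>count_space I) \<le> (\<integral>\<^sup>+i. indicator (X i) x \<partial>count_space I)"
        using j by (intro nn_integral_mono) (auto simp: indicator_def)
      moreover have "(\<integral>\<^sup>+i. indicator {j} i \<partial>count_space I) = (1::ennreal)"
        using j by (subst nn_integral_indicator) (auto simp: emeasure_count_space)
      ultimately show ?thesis using True by simp
    qed simp
  qed
  also have "\<dots> = (\<integral>\<^sup>+i. (\<integral>\<^sup>+x. indicator (X i) x \<partial>\<mu>) \<partial>count_space I)"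
    using assms by (intro nn_integral_count_space_nn_integral) auto
  also have "\<dots> = (\<integral>\<^sup>+i. emeasure \<mu> (X i) \<partial>count_space I)"
    using assms by (intro nn_integral_cong) auto
  finally show ?thesis .
qed

lemma step:
  assumes t: "0 < t" "2 * t \<le> R"
  shows "measure \<mu> (ball a R - ball a (R - t)) \<le> D^3 * measure \<mu> (ball a (R - t) - ball a (R - 2 * t))"
proof -
  define \<rho> where "\<rho> = R - 3/2 * t"
  have \<rho>: "\<rho> > 0" using t unfolding \<rho>_def by simp
  have "sphere a \<rho> \<subseteq> (\<Union>i\<in>sphere a \<rho>. ball (id i) (t/2))" using t by auto
  then obtain C where C: "countable C" "C \<subseteq> sphere a \<rho>"
     "pairwise (\<lambda>i j. disjnt (ball (id i) (t/2)) (ball (id j) (t/2))) C"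
     "sphere a \<rho> \<subseteq> (\<Union>i\<in>C. ball (id i) (5 * (t/2)))"
    using Vitali_covering_lemma_balls[where S="sphere a \<rho>" and K="sphere a \<rho>" and a=id and r="\<lambda>_. t/2" and B="t/2"] t by auto
  have cov: "ball a R - ball a (R - t) \<subseteq> (\<Union>i\<in>C. ball i (4 * t))"
  proof
    fix z assume z: "z \<in> ball a R - ball a (R - t)"
    define n where "n = dist a z"
    have n: "n < R" "R - t \<le> n" using z unfolding n_def by auto
    have npos: "n > 0" using n t by simp
    define z' where "z' = a + (\<rho> / n) *\<^sub>R (z - a)"
    have "dist a z' = \<rho>" unfolding z'_def using npos \<rho>
      by (simp add: dist_norm n_def dist_commute norm_minus_commute)
    then obtain i where i: "i \<in> C" "dist i z' < 5 * (t/2)" using C(4) by (auto simp: dist_commute)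
    have "z - z' = (1 - \<rho>/n) *\<^sub>R (z - a)" unfolding z'_def by (simp add: algebra_simps)
    then have "dist z z' = \<bar>1 - \<rho>/n\<bar> * n" by (simp add: dist_norm n_def dist_commute norm_minus_commute)
    also have "\<dots> = n - \<rho>" using npos n t unfolding \<rho>_def by (simp add: field_simps abs_if)
    finally have "dist z z' < 3/2 * t" using n unfolding \<rho>_def by simp
    with i have "dist i z < 4 * t" using dist_triangle[of i z z'] by (simp add: dist_commute)
    with i show "z \<in> (\<Union>i\<in>C. ball i (4 * t))" by auto
  qed
  have sub: "(\<Union>i\<in>C. ball i (t/2)) \<subseteq> ball a (R - t) - ball a (R - 2 * t)"
  proof
    fix w assume "w \<in> (\<Union>i\<in>C. ball i (t/2))"
    then obtain i where i: "i \<in> C" "dist i w < t/2" by auto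
    have "dist a i = \<rho>" using i C(2) by auto
    then have "dist a w < R - t" "dist a w > R - 2 * t"
      using dist_triangle[of a w i] dist_triangle[of a i w] i unfolding \<rho>_def by (auto simp: dist_commute)
    then show "w \<in> ball a (R - t) - ball a (R - 2 * t)" by auto
  qed
  have disj: "disjoint_family_on (\<lambda>i. ball i (t/2)) C"
    using C(3) unfolding disjoint_family_on_def pairwise_def disjnt_def by auto
  have "emeasure \<mu> (ball a R - ball a (R - t)) \<le> emeasure \<mu> (\<Union>i\<in>C. ball i (4 * t))"
    using cov by (intro emeasure_mono) (auto intro: sets.countable_UN' C(1))
  also have "\<dots> \<le> (\<integral>\<^sup>+i. emeasure \<mu> (ball i (4 * t)) \<partial>count_space C)"
    using UN_le[of C "\<lambda>i. ball i (4 * t)"] C(1) by simp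
  also have "\<dots> \<le> (\<integral>\<^sup>+i. ennreal (D^3) * emeasure \<mu> (ball i (t/2)) \<partial>count_space C)"
    using dbl3[of "t/2"] t by (intro nn_integral_mono) simp
  also have "\<dots> = ennreal (D^3) * (\<integral>\<^sup>+i. emeasure \<mu> (ball i (t/2)) \<partial>count_space C)"
    by (intro nn_integral_cmult) simp
  also have "\<dots> = ennreal (D^3) * emeasure \<mu> (\<Union>i\<in>C. ball i (t/2))"
    using emeasure_UN_countable[of C "\<lambda>i. ball i (t/2)" \<mu>] C(1) disj by simp
  also have "\<dots> \<le> ennreal (D^3) * emeasure \<mu> (ball a (R - t) - ball a (R - 2 * t))"
    using sub by (intro mult_left_mono emeasure_mono) auto
  also have "emeasure \<mu> (ball a (R - t) - ball a (R - 2 * t)) = ennreal (measure \<mu> (ball a (R - t) - ball a (R - 2 * t)))"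
    using t by (intro em_eq[of _ a R]) auto
  finally have "ennreal (measure \<mu> (ball a R - ball a (R - t))) \<le> ennreal (D^3) * ennreal (measure \<mu> (ball a (R - t) - ball a (R - 2 * t)))"
    using em_eq[of "ball a R - ball a (R - t)" a R] by auto
  also have "\<dots> = ennreal (D^3 * measure \<mu> (ball a (R - t) - ball a (R - 2 * t)))"
    using D1 by (simp add: ennreal_mult)
  finally show ?thesis using D1 by (simp add: ennreal_le_iff)
qed

definition "eta = D^3 / (D^3 + 1)"
definition "theta = log 2 (1 / eta)"

lemma eta: "eta > 0" "eta < 1" "eta \<ge> 1/2"
proof -
  have d: "D^3 \<ge> 1" using D1 by simp
  have d2: "D^3 + 1 > 0" "D^3 > 0" using d by linarith+
  then show "eta > 0" unfolding eta_def by (intro divide_pos_pos)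
  show "eta < 1" using d unfolding eta_def by simp
  show "eta \<ge> 1/2" using d unfolding eta_def by (simp add: field_simps)
qed

lemma theta: "theta > 0" "theta \<le> 1" "2 powr (- theta) = eta"
proof -
  show "theta > 0" using eta unfolding theta_def by simp
  have "1 / eta \<le> 2" using eta by (simp add: field_simps)
  then show "theta \<le> 1" using eta unfolding theta_def by (simp add: log_le_one_cancel_iff)
  show "2 powr (- theta) = eta" using eta unfolding theta_def by (simp add: powr_minus)
qed

lemma step2:
  assumes t: "0 < t" "2 * t \<le> R"
  shows "measure \<mu> (ball a R - ball a (R - t)) \<le> eta * measure \<mu> (ball a R - ball a (R - 2 * t))"
proof -
  let ?A = "ball a R - ball a (R - t)" and ?M = "ball a (R - t) - ball a (R - 2 * t)"
  have eq: "ball a R - ball a (R - 2 * t) = ?A \<union> ?M" using t by auto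
  have "measure \<mu> (ball a R - ball a (R - 2 * t)) = measure \<mu> ?A + measure \<mu> ?M"
  proof -
    have "?M \<subseteq> ball a R" "?A \<subseteq> ball a R" using t by auto
    then show ?thesis
      unfolding eq using t fin_bounded[of ?A a R] fin_bounded[of ?M a R]
      by (intro measure_Union) auto
  qed
  moreover have "measure \<mu> ?A \<le> D^3 * measure \<mu> ?M" using step[OF t] .
  moreover have "D^3 \<ge> 1" using D1 by simp
  ultimately show ?thesis unfolding eta_def by (simp add: field_simps)
qed

lemma iter:
  assumes R: "R > 0"
  shows "0 < t \<Longrightarrow> t \<le> R / 2^k \<Longrightarrow> measure \<mu> (ball a R - ball a (R - t)) \<le> eta^k * measure \<mu> (ball a R)"
proof (induction k arbitrary: t)
  case 0
  then show ?case using fmeas[of "ball a R" a R] by (simp add: measure_mono_fmeasurable)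
next
  case (Suc k)
  have "2 * t \<le> R / 2^k" using Suc.prems by (simp add: field_simps)
  moreover have "R / 2^k \<le> R" using R by (simp add: field_simps)
  ultimately have "measure \<mu> (ball a R - ball a (R - t)) \<le> eta * measure \<mu> (ball a R - ball a (R - 2 * t))"
    using Suc.prems by (intro step2) auto
  also have "\<dots> \<le> eta * (eta^k * measure \<mu> (ball a R))"
    using Suc.IH[of "2 * t"] Suc.prems \<open>2 * t \<le> R / 2^k\<close> eta by (intro mult_left_mono) auto
  finally show ?case by simp
qed

lemma annulus:
  assumes t: "0 < t" "t \<le> R"
  shows "measure \<mu> (ball a R - ball a (R - t)) \<le> 2 * (t / R) powr theta * measure \<mu> (ball a R)"
proof -
  have R: "R > 0" using t by simp
  define k where "k = nat \<lfloor>log 2 (R / t)\<rfloor>"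
  have l0: "log 2 (R / t) \<ge> 0" using t by simp
  have k1: "real k \<le> log 2 (R / t)" unfolding k_def using l0 by linarith
  have k2: "log 2 (R / t) < real k + 1" unfolding k_def using l0 by linarith
  have "2 powr real k \<le> R / t" using k1 t by (simp add: le_log_iff)
  then have "(2::real)^k \<le> R / t" by (simp add: powr_realpow)
  then have tk: "t \<le> R / 2^k" using t by (simp add: field_simps)
  have "R / t < 2 powr (real k + 1)" using k2 t by (simp add: log_less_iff)
  then have "1 / (2 powr (real k + 1)) < 1 / (R / t)" using t
    by (intro divide_strict_left_mono) auto
  moreover have "2 powr (-(real k + 1)) = 1 / (2 powr (real k + 1))" by (simp only: powr_minus inverse_eq_divide)
  ultimately have "t / R > 2 powr (-(real k + 1))" using t by simp
  then have "(t / R) powr theta \<ge> (2 powr (-(real k + 1))) powr theta"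
    using theta by (intro powr_mono2) auto
  also have "(2 powr (-(real k + 1))) powr theta = (2 powr (- theta)) powr (real k) * 2 powr (- theta)"
    by (simp add: powr_powr powr_add[symmetric] algebra_simps)
  also have "\<dots> = eta^k * eta" using theta eta by (simp add: powr_realpow)
  finally have "eta^k * eta \<le> (t / R) powr theta" .
  moreover have "eta^k * 1 \<le> eta^k * (2 * eta)" using eta by (intro mult_left_mono) auto
  ultimately have "eta^k \<le> 2 * (t / R) powr theta" by (simp add: algebra_simps)
  have "measure \<mu> (ball a R - ball a (R - t)) \<le> eta^k * measure \<mu> (ball a R)"
    using iter[OF R t(1) tk] .
  also have "\<dots> \<le> 2 * (t / R) powr theta * measure \<mu> (ball a R)"
    using \<open>eta^k \<le> 2 * (t / R) powr theta\<close> by (intro mult_right_mono) auto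
  finally show ?thesis .
qed

lemma int_bound:
  fixes v :: "'a \<Rightarrow> real"
  assumes v: "v \<in> borel_measurable \<mu>" and bnd: "AE z in \<mu>. \<bar>v z\<bar> \<le> M" and M: "M \<ge> 0"
    and S: "S \<in> sets borel" "S \<subseteq> ball c s"
  shows "integrable \<mu> (\<lambda>z. indicator S z *\<^sub>R v z)"
    "\<bar>\<integral>z. indicator S z *\<^sub>R v z \<partial>\<mu>\<bar> \<le> M * measure \<mu> S"
proof -
  have iS: "integrable \<mu> (\<lambda>z. M * indicator S z)"
    using S fin_bounded[OF S(2,1)] by (intro integrable_mult_right) auto
  show i: "integrable \<mu> (\<lambda>z. indicator S z *\<^sub>R v z)"
  proof (rule Bochner_Integration.integrable_bound[OF iS])
    show "(\<lambda>z. indicator S z *\<^sub>R v z) \<in> borel_measurable \<mu>"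
      using v S by (intro borel_measurable_scaleR borel_measurable_indicator) auto
    show "AE z in \<mu>. norm (indicator S z *\<^sub>R v z) \<le> norm (M * indicator S z)"
      using bnd by eventually_elim (insert M, auto simp: indicator_def)
  qed
  have "\<bar>\<integral>z. indicator S z *\<^sub>R v z \<partial>\<mu>\<bar> \<le> (\<integral>z. \<bar>indicator S z *\<^sub>R v z\<bar> \<partial>\<mu>)"
    using integral_norm_bound[of \<mu> "\<lambda>z. indicator S z *\<^sub>R v z"] by simp
  also have "\<dots> \<le> (\<integral>z. M * indicator S z \<partial>\<mu>)"
    apply (rule integral_mono_AE)
    using i iS apply auto[2]
    using bnd by eventually_elim (insert M, auto simp: indicator_def)
  also have "\<dots> = M * measure \<mu> S" using S fin_bounded[OF S(2,1)] by simp
  finally show "\<bar>\<integral>z. indicator S z *\<^sub>R v z \<partial>\<mu>\<bar> \<le> M * measure \<mu> S" .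
qed

lemma int_diff:
  fixes v :: "'a \<Rightarrow> real"
  assumes v: "v \<in> borel_measurable \<mu>" and bnd: "AE z in \<mu>. \<bar>v z\<bar> \<le> M" and M: "M \<ge> 0"
    and S: "S \<in> sets borel" "S \<subseteq> ball c s" and T: "T \<in> sets borel" "T \<subseteq> ball c s"
  shows "\<bar>(\<integral>z. indicator S z *\<^sub>R v z \<partial>\<mu>) - (\<integral>z. indicator T z *\<^sub>R v z \<partial>\<mu>)\<bar>
     \<le> M * measure \<mu> ((S - T) \<union> (T - S))"
proof -
  let ?E = "(S - T) \<union> (T - S)"
  have E: "?E \<in> sets borel" "?E \<subseteq> ball c s" using S T by auto
  have iS: "integrable \<mu> (\<lambda>z. indicator S z *\<^sub>R v z)" using int_bound[OF v bnd M S] by simp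
  have iT: "integrable \<mu> (\<lambda>z. indicator T z *\<^sub>R v z)" using int_bound[OF v bnd M T] by simp
  have iE: "integrable \<mu> (\<lambda>z. M * indicator ?E z)"
    using E fin_bounded[OF E(2,1)] by (intro integrable_mult_right) auto
  have "(\<integral>z. indicator S z *\<^sub>R v z \<partial>\<mu>) - (\<integral>z. indicator T z *\<^sub>R v z \<partial>\<mu>)
      = (\<integral>z. indicator S z *\<^sub>R v z - indicator T z *\<^sub>R v z \<partial>\<mu>)"
    using iS iT by simp
  also have "\<bar>\<dots>\<bar> \<le> (\<integral>z. \<bar>indicator S z *\<^sub>R v z - indicator T z *\<^sub>R v z\<bar> \<partial>\<mu>)"
    using integral_norm_bound[of \<mu> "\<lambda>z. indicator S z *\<^sub>R v z - indicator T z *\<^sub>R v z"] by simp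
  also have "\<dots> \<le> (\<integral>z. M * indicator ?E z \<partial>\<mu>)"
    apply (rule integral_mono_AE)
    using iS iT iE apply auto[2]
    using bnd by eventually_elim (insert M, auto simp: indicator_def)
  also have "\<dots> = M * measure \<mu> ?E" using E fin_bounded[OF E(2,1)] by simp
  finally show ?thesis .
qed

lemma mpos: "s > 0 \<Longrightarrow> measure \<mu> (ball a s) > 0"
  using pos[of s a] em_eq[of "ball a s" a s] by simp

lemma main_est:
  fixes v :: "'a \<Rightarrow> real"
  assumes v: "v \<in> borel_measurable \<mu>" and bnd: "AE z in \<mu>. \<bar>v z\<bar> \<le> M" and M: "M \<ge> 0"
    and r: "rx > 0" "ry > 0" "\<bar>rx - ry\<bar> \<le> dist x y"
  shows "\<bar>(\<integral>z. indicator (ball x rx) z *\<^sub>R v z \<partial>\<mu>) / measure \<mu> (ball x rx)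
          - (\<integral>z. indicator (ball y ry) z *\<^sub>R v z \<partial>\<mu>) / measure \<mu> (ball y ry)\<bar>
       \<le> (8 + 16 * D) * M * (dist x y / rx) powr theta"
proof -
  define h where "h = dist x y"
  define Ix where "Ix = (\<integral>z. indicator (ball x rx) z *\<^sub>R v z \<partial>\<mu>)"
  define Iy where "Iy = (\<integral>z. indicator (ball y ry) z *\<^sub>R v z \<partial>\<mu>)"
  define mx where "mx = measure \<mu> (ball x rx)"
  define my where "my = measure \<mu> (ball y ry)"
  define q where "q = (h / rx) powr theta"
  have mx: "mx > 0" unfolding mx_def using mpos r by auto
  have my: "my > 0" unfolding my_def using mpos r by auto
  have Ixb: "\<bar>Ix\<bar> \<le> M * mx" unfolding Ix_def mx_def using int_bound[OF v bnd M, of "ball x rx" x rx] by simp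
  have Iyb: "\<bar>Iy\<bar> \<le> M * my" unfolding Iy_def my_def using int_bound[OF v bnd M, of "ball y ry" y ry] by simp
  have q0: "q \<ge> 0" unfolding q_def by simp
  have "\<bar>Ix / mx - Iy / my\<bar> \<le> (8 + 16 * D) * M * q"
  proof (cases "h = 0")
    case True
    then have "x = y" "rx = ry" using r unfolding h_def by auto
    then show ?thesis unfolding Ix_def Iy_def mx_def my_def q_def using M D1 q0 by simp
  next
    case hne: False
    then have h0: "h > 0" unfolding h_def by simp
    show ?thesis
    proof (cases "h \<ge> rx / 4")
      case True
      have "\<bar>Ix / mx\<bar> \<le> M" using Ixb mx by (simp add: abs_divide field_simps)
      moreover have "\<bar>Iy / my\<bar> \<le> M" using Iyb my by (simp add: abs_divide field_simps)
      ultimately have "\<bar>Ix / mx - Iy / my\<bar> \<le> 2 * M" by linarith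
      moreover have "q \<ge> 1/4"
      proof -
        have "(1/4) powr theta \<le> q" unfolding q_def using True r theta by (intro powr_mono2) (auto simp: field_simps)
        moreover have "(1/4::real) powr 1 \<le> (1/4) powr theta" using theta by (intro powr_mono') auto
        ultimately show ?thesis by simp
      qed
      moreover have "8 * M * q \<le> (8 + 16 * D) * M * q" using D1 M q0
        by (intro mult_right_mono) auto
      moreover have "M * 2 \<le> M * (8 * q)" using M \<open>q \<ge> 1/4\<close> by (intro mult_left_mono) auto
      ultimately show ?thesis by (simp add: algebra_simps)
    next
      case False
      then have hs: "h < rx / 4" by simp
      have ry2: "ry > rx / 2" "ry < 2 * rx" using r hs unfolding h_def by auto
      let ?Bx = "ball x rx" and ?By = "ball y ry"
      let ?E = "(?Bx - ?By) \<union> (?By - ?Bx)"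
      let ?Ax = "ball x rx - ball x (rx - 2 * h)" and ?Ay = "ball y ry - ball y (ry - 2 * h)"
      have Bsub: "?Bx \<subseteq> ball x (2 * rx)" "?By \<subseteq> ball x (2 * rx)"
      proof -
        show "?Bx \<subseteq> ball x (2 * rx)" using r by auto
        show "?By \<subseteq> ball x (2 * rx)"
        proof
          fix z assume "z \<in> ?By"
          then have "dist y z < ry" by simp
          moreover have "dist x z \<le> dist x y + dist y z" by (rule dist_triangle)
          ultimately show "z \<in> ball x (2 * rx)" using r hs unfolding h_def by auto
        qed
      qed
      have Bsub2: "?By \<subseteq> ball x (2 * rx)" using Bsub by simp
      have Eb: "?E \<subseteq> ball x (2 * rx)" using Bsub by blast
      define \<delta> where "\<delta> = measure \<mu> ?E"
      have d1: "\<bar>Ix - Iy\<bar> \<le> M * \<delta>" unfolding Ix_def Iy_def \<delta>_def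
        using int_diff[OF v bnd M, of ?Bx x "2 * rx" ?By] Bsub by simp
      have fm: "\<And>S. S \<in> sets borel \<Longrightarrow> S \<subseteq> ball x (2 * rx) \<Longrightarrow> S \<in> fmeasurable \<mu>"
        by (rule fmeas)
      have d2: "\<bar>mx - my\<bar> \<le> \<delta>"
      proof -
        have "mx \<le> measure \<mu> (?By \<union> ?E)" unfolding mx_def
          using Bsub by (intro measure_mono_fmeasurable fm) auto
        also have "\<dots> \<le> my + \<delta>" unfolding my_def \<delta>_def
          using Bsub fin_bounded[of ?By x "2 * rx"] fin_bounded[OF Eb]
          by (intro measure_subadditive) auto
        finally have a: "mx \<le> my + \<delta>" .
        have "my \<le> measure \<mu> (?Bx \<union> ?E)" unfolding my_def
          using Bsub by (intro measure_mono_fmeasurable fm) auto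
        also have "\<dots> \<le> mx + \<delta>" unfolding mx_def \<delta>_def
          using Bsub fin_bounded[of ?Bx x "2 * rx"] fin_bounded[OF Eb]
          by (intro measure_subadditive) auto
        finally show ?thesis using a by linarith
      qed
      have Esub: "?E \<subseteq> ?Ax \<union> ?Ay"
      proof
        fix z assume z: "z \<in> ?E"
        have t1: "dist x z \<le> dist y z + h" "dist y z \<le> dist x z + h"
          unfolding h_def using dist_triangle[of x z y] dist_triangle[of y z x] by (auto simp: dist_commute)
        show "z \<in> ?Ax \<union> ?Ay" using z t1 r(3) unfolding h_def by auto
      qed
      have Ay_sub: "?Ay \<subseteq> ball x (2 * rx)" using Bsub by blast
      have Ax_sub: "?Ax \<subseteq> ball x (2 * rx)" using Bsub by blast
      have "\<delta> \<le> measure \<mu> (?Ax \<union> ?Ay)" unfolding \<delta>_def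
        using Esub Bsub by (intro measure_mono_fmeasurable fm) auto
      also have "\<dots> \<le> measure \<mu> ?Ax + measure \<mu> ?Ay"
        using Bsub fin_bounded[OF Ax_sub] fin_bounded[OF Ay_sub]
        by (intro measure_subadditive) auto
      finally have dsum: "\<delta> \<le> measure \<mu> ?Ax + measure \<mu> ?Ay" .
      have "measure \<mu> ?Ax \<le> 2 * (2 * h / rx) powr theta * mx"
        unfolding mx_def using h0 hs by (intro annulus) auto
      moreover have "measure \<mu> ?Ay \<le> 2 * (2 * h / ry) powr theta * my"
        unfolding my_def using h0 hs ry2 by (intro annulus) auto
      ultimately have dle: "\<delta> \<le> 2 * (2 * h / rx) powr theta * mx + 2 * (2 * h / ry) powr theta * my"
        using dsum by linarith
      have p1: "(2 * h / rx) powr theta \<le> 2 * q"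
      proof -
        have "(2 * h / rx) powr theta = 2 powr theta * q" unfolding q_def
          using h0 r by (simp add: powr_mult[symmetric])
        moreover have "(2::real) powr theta \<le> 2 powr 1" using theta by (intro powr_mono) auto
        ultimately show ?thesis using q0 by (simp add: mult_right_mono)
      qed
      have p2: "(2 * h / ry) powr theta \<le> 4 * q"
      proof -
        have "(2 * h / ry) powr theta \<le> (4 * h / rx) powr theta"
          using theta h0 r ry2 by (intro powr_mono2) (auto simp: field_simps)
        also have "(4 * h / rx) powr theta = 4 powr theta * q" unfolding q_def
          using h0 r by (simp add: powr_mult[symmetric])
        also have "(4::real) powr theta \<le> 4 powr 1" using theta by (intro powr_mono) auto
        then have "4 powr theta * q \<le> 4 * q" using q0 by (simp add: mult_right_mono)
        finally show ?thesis .
      qed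
      have myD: "my \<le> D * mx"
      proof -
        have "my \<le> measure \<mu> (ball x (2 * rx))" unfolding my_def
          using Bsub by (intro measure_mono_fmeasurable fm) auto
        also have "\<dots> \<le> D * mx" unfolding mx_def using dbl_real r by auto
        finally show ?thesis .
      qed
      have "2 * (2 * h / rx) powr theta * mx \<le> 2 * (2 * q) * mx"
        using p1 mx by (intro mult_right_mono) auto
      moreover have "2 * (2 * h / ry) powr theta * my \<le> 2 * (4 * q) * (D * mx)"
        using p2 myD my q0 by (intro mult_mono) auto
      ultimately have "\<delta> \<le> (4 + 8 * D) * q * mx" using dle by (simp add: algebra_simps)
      have "\<bar>Ix / mx - Iy / my\<bar> \<le> 2 * M * \<delta> / mx" by (rule alg[OF mx my Iyb d1 d2 M])
      also have "\<dots> \<le> 2 * M * ((4 + 8 * D) * q * mx) / mx"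
        using \<open>\<delta> \<le> (4 + 8 * D) * q * mx\<close> M mx by (intro divide_right_mono mult_left_mono) auto
      also have "\<dots> = (8 + 16 * D) * M * q" using mx by (simp add: field_simps)
      finally show ?thesis .
    qed
  qed
  then show ?thesis unfolding Ix_def Iy_def mx_def my_def q_def h_def .
qed

end

lemma ball_sub_domain:
  fixes \<Omega> :: "'a::euclidean_space set"
  assumes "domain \<Omega>" "admissible_radius \<Omega> r" "x \<in> \<Omega>"
  shows "ball x (r x) \<subseteq> \<Omega>"
proof (cases "frontier \<Omega> = {}")
  case True
  then have "\<Omega> = UNIV" using assms(1) frontier_eq_empty unfolding domain_def by blast
  then show ?thesis by simp
next
  case False
  then have rx: "r x \<le> infdist x (frontier \<Omega>)" using assms unfolding admissible_radius_def by auto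
  show ?thesis
  proof
    fix z assume z: "z \<in> ball x (r x)"
    show "z \<in> \<Omega>"
    proof (rule ccontr)
      assume zn: "z \<notin> \<Omega>"
      have "closed_segment x z \<inter> frontier \<Omega> \<noteq> {}"
        using assms(3) zn by (intro connected_Int_frontier) auto
      then obtain w where w: "w \<in> closed_segment x z" "w \<in> frontier \<Omega>" by auto
      have "dist x w \<le> dist x z" using w(1) by (simp add: dist_commute dist_in_closed_segment)
      also have "\<dots> < r x" using z by simp
      also have "\<dots> \<le> infdist x (frontier \<Omega>)" by (rule rx)
      also have "\<dots> \<le> dist x w" using w(2) by (rule infdist_le)
      finally show False by simp
    qed
  qed
qed

theorem lemma2p3:
  fixes \<mu> :: "'a::euclidean_space measure"
  assumes "doubling_measure \<mu>"
  shows "\<exists>C \<theta>::real. C > 0 \<and> 0 < \<theta> \<and> \<theta> \<le> 1 \<and>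
    (\<forall>(\<Omega>::'a set) (r::'a \<Rightarrow> real) (u::'a \<Rightarrow> real).
       domain \<Omega> \<longrightarrow> admissible_radius \<Omega> r \<longrightarrow>
       (\<forall>x\<in>\<Omega>. \<forall>y\<in>\<Omega>. \<bar>r x - r y\<bar> \<le> dist x y) \<longrightarrow>
       Linf_on \<mu> \<Omega> u \<longrightarrow>
       (\<forall>x\<in>\<Omega>. \<forall>y\<in>\<Omega>.
          \<bar>avg_op \<mu> r u x - avg_op \<mu> r u y\<bar> \<le> C * Linf_norm \<mu> \<Omega> u * (dist x y / r x) powr \<theta>))"
proof -
  obtain D where D: "sets \<mu> = sets borel"
     "\<And>a s. s > 0 \<Longrightarrow> 0 < emeasure \<mu> (ball a s) \<and> emeasure \<mu> (ball a s) < \<infinity>"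
     "D \<ge> 1" "\<And>a s. s > 0 \<Longrightarrow> emeasure \<mu> (ball a (2 * s)) \<le> ennreal D * emeasure \<mu> (ball a s)"
    using assms unfolding doubling_measure_def by blast
  interpret dbl \<mu> D using D by unfold_locales auto
  have sp: "space \<mu> = UNIV" using sets_eq_imp_space_eq[OF D(1)] by simp
  have th: "0 < theta" "theta \<le> 1" using theta by auto
  have C0: "8 + 16 * D > 0" using D1 by simp
  have main: "\<forall>(\<Omega>::'a set) (r::'a \<Rightarrow> real) (u::'a \<Rightarrow> real).
       domain \<Omega> \<longrightarrow> admissible_radius \<Omega> r \<longrightarrow>
       (\<forall>x\<in>\<Omega>. \<forall>y\<in>\<Omega>. \<bar>r x - r y\<bar> \<le> dist x y) \<longrightarrow>
       Linf_on \<mu> \<Omega> u \<longrightarrow>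
       (\<forall>x\<in>\<Omega>. \<forall>y\<in>\<Omega>.
          \<bar>avg_op \<mu> r u x - avg_op \<mu> r u y\<bar> \<le> (8 + 16 * D) * Linf_norm \<mu> \<Omega> u * (dist x y / r x) powr theta)"
  proof (intro allI impI ballI)
    fix \<Omega> :: "'a set" and r :: "'a \<Rightarrow> real" and u :: "'a \<Rightarrow> real" and x y
    assume dom: "domain \<Omega>" and adm: "admissible_radius \<Omega> r"
      and lip: "\<forall>x\<in>\<Omega>. \<forall>y\<in>\<Omega>. \<bar>r x - r y\<bar> \<le> dist x y" and Linf: "Linf_on \<mu> \<Omega> u"
      and x: "x \<in> \<Omega>" and y: "y \<in> \<Omega>"
    have op: "open \<Omega>" using dom unfolding domain_def by simp
    have \<Omega>s: "\<Omega> \<inter> space \<mu> \<in> sets \<mu>" using op by simp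
    have rpos: "r x > 0" "r y > 0" using adm x y unfolding admissible_radius_def by auto
    have bx: "ball x (r x) \<subseteq> \<Omega>" and by': "ball y (r y) \<subseteq> \<Omega>"
      using ball_sub_domain[OF dom adm] x y by auto
    define M where "M = Linf_norm \<mu> \<Omega> u"
    define E where "E = esssup (restrict_space \<mu> \<Omega>) (\<lambda>x. ereal \<bar>u x\<bar>)"
    have Einf: "E < \<infinity>" using Linf unfolding Linf_on_def E_def by simp
    have ME: "M = real_of_ereal E" unfolding M_def E_def Linf_norm_def ..
    have "AE z in restrict_space \<mu> \<Omega>. ereal \<bar>u z\<bar> \<le> E" unfolding E_def by (rule esssup_AE)
    then have "AE z in restrict_space \<mu> \<Omega>. \<bar>u z\<bar> \<le> M"
    proof eventually_elim
      case (elim z)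
      then show ?case using Einf unfolding ME by (cases E) auto
    qed
    then have AEu: "AE z in \<mu>. z \<in> \<Omega> \<longrightarrow> \<bar>u z\<bar> \<le> M" using AE_restrict_space_iff[OF \<Omega>s] by simp
    have M0: "M \<ge> 0"
    proof (rule ccontr)
      assume Mn: "\<not> M \<ge> 0"
      have "AE z in \<mu>. z \<notin> ball x (r x)" using AEu by eventually_elim (insert bx Mn, auto)
      then have "emeasure \<mu> (ball x (r x)) = 0"
        by (subst (asm) AE_iff_measurable[of "ball x (r x)"]) (auto simp: sp)
      then show False using pos[OF rpos(1), of x] by simp
    qed
    define v where "v z = indicator \<Omega> z *\<^sub>R u z" for z
    have vm: "v \<in> borel_measurable \<mu>" unfolding v_def
      using Linf borel_measurable_restrict_space_iff[OF \<Omega>s] unfolding Linf_on_def by blast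
    have vb: "AE z in \<mu>. \<bar>v z\<bar> \<le> M" using AEu by eventually_elim (insert M0, auto simp: v_def indicator_def)
    have eqx: "avg_op \<mu> r u x = (\<integral>z. indicator (ball x (r x)) z *\<^sub>R v z \<partial>\<mu>) / measure \<mu> (ball x (r x))"
      unfolding avg_op_def set_lebesgue_integral_def v_def
      using bx by (intro arg_cong2[where f="(/)"] Bochner_Integration.integral_cong) (auto simp: indicator_def)
    have eqy: "avg_op \<mu> r u y = (\<integral>z. indicator (ball y (r y)) z *\<^sub>R v z \<partial>\<mu>) / measure \<mu> (ball y (r y))"
      unfolding avg_op_def set_lebesgue_integral_def v_def
      using by' by (intro arg_cong2[where f="(/)"] Bochner_Integration.integral_cong) (auto simp: indicator_def)
    show "\<bar>avg_op \<mu> r u x - avg_op \<mu> r u y\<bar> \<le> (8 + 16 * D) * Linf_norm \<mu> \<Omega> u * (dist x y / r x) powr theta"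
      unfolding eqx eqy M_def[symmetric]
      using lip x y by (intro main_est[OF vm vb M0 rpos]) auto
  qed
  show ?thesis using th C0 main by blast
qed

end
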